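(* For every $n\ge1$: - the sum of the Wiener indices of all binary trees on $n$ vertices, i.e. the sum of $d(u,w)$ over all binary trees $T$ on $n$ vertices and all unordered pairs $\{u,w\}$ of distinct vertices of $T$, is $$\frac{n+2}{2}\,4^n-\frac{(2n+1)!}{(n!)^2};$$ - its generating function is $\frac{1-\sqrt{1-4x}-2x}{(1-4x)^2}$; - the number of such pairs $(T,\{u,w\})$ is $\binom n2\frac1{n+1}\binom{2n}{n}$. Consequently, the expected distance between a uniformly random pair of distinct vertices in a uniformly random binary tree on $n$ vertices is $$\sqrt{\pi n}-4+O\Bigl(\frac1{\sqrt n}\Bigr).$$
   Context: Binary trees are rooted trees in which every vertex has at most one left child and at most one right child, so a single child is designated left or right. The size is the number of vertices. $d(u,w)$ is the number of edges of the path between $u$ and $w$. *)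

theory Defs
  imports "HOL-Analysis.Analysis" "HOL-Library.Tree" "HOL-Library.Landau_Symbols"
begin

text \<open>Binary trees are modelled as shapes of type unit tree (HOL-Library.Tree):
  Leaf is the empty tree, Node l () r has a root with left subtree l and right
  subtree r (each possibly empty).
  A vertex is identified with its address: the list of directions
  (False = left, True = right) from the root.\<close>

fun vertices :: "'a tree \<Rightarrow> bool list set" where
  "vertices Leaf = {}"
| "vertices (Node l _ r) = insert [] (Cons False ` vertices l \<union> Cons True ` vertices r)"

text \<open>Length of the longest common prefix of two addresses (depth of the lowest common ancestor).\<close>
fun lcp_len :: "bool list \<Rightarrow> bool list \<Rightarrow> nat" where
  "lcp_len (a # as) (b # bs) = (if a = b then Suc (lcp_len as bs) else 0)"
| "lcp_len _ _ = 0"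

text \<open>Number of edges on the tree path between two vertices.\<close>
definition tdist :: "bool list \<Rightarrow> bool list \<Rightarrow> nat" where
  "tdist u w = length u + length w - 2 * lcp_len u w"

definition bintrees :: "nat \<Rightarrow> unit tree set" where
  "bintrees n = {t. size t = n}"

definition vpairs :: "'a tree \<Rightarrow> bool list set set" where
  "vpairs t = {e. e \<subseteq> vertices t \<and> card e = 2}"

definition pdist :: "bool list set \<Rightarrow> nat" where
  "pdist e = (THE d. \<exists>u w. e = {u, w} \<and> d = tdist u w)"

definition wiener :: "'a tree \<Rightarrow> nat" where
  "wiener t = (\<Sum>e\<in>vpairs t. pdist e)"

definition total_wiener :: "nat \<Rightarrow> nat" where
  "total_wiener n = (\<Sum>t\<in>bintrees n. wiener t)"

definition num_pairs :: "nat \<Rightarrow> nat" where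
  "num_pairs n = card {(t, e). t \<in> bintrees n \<and> e \<in> vpairs t}"

definition expected_dist :: "nat \<Rightarrow> real" where
  "expected_dist n = (\<Sum>t\<in>bintrees n. real (wiener t) / real (card (vpairs t)))
                      / real (card (bintrees n))"

end

theory Submission
  imports Defs "HOL-Computational_Algebra.Formal_Power_Series" "HOL-Real_Asymp.Real_Asymp"
begin


lemma finite_vertices[simp]: "finite (vertices t)"
  by (induction t) auto

lemma Nil_in_vertices: "t \<noteq> Leaf \<Longrightarrow> [] \<in> vertices t"
  by (cases t) auto

lemma card_vertices: "card (vertices t) = size t"
proof (induction t)
  case Leaf then show ?case by simp
next
  case (Node l x r)
  have d: "Cons False ` vertices l \<inter> Cons True ` vertices r = {}" by auto
  have "card (Cons False ` vertices l \<union> Cons True ` vertices r) = size l + size r"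
    using Node by (subst card_Un_disjoint) (auto simp: d card_image)
  moreover have "[] \<notin> Cons False ` vertices l \<union> Cons True ` vertices r" by auto
  ultimately show ?case by simp
qed

lemma lcp_len_le: "lcp_len u w \<le> length u" "lcp_len u w \<le> length w"
  by (induction u w rule: lcp_len.induct) auto

lemma lcp_len_sym: "lcp_len u w = lcp_len w u"
  by (induction u w rule: lcp_len.induct) (auto elim: lcp_len.elims)

lemma tdist_sym: "tdist u w = tdist w u"
  by (simp add: tdist_def lcp_len_sym add.commute)

lemma lcp_len_self: "lcp_len u u = length u"
  by (induction u) auto

lemma tdist_self[simp]: "tdist u u = 0"
  by (simp add: tdist_def lcp_len_self)

lemma tdist_Nil1[simp]: "tdist [] w = length w" and tdist_Nil2[simp]: "tdist w [] = length w"
  by (simp_all add: tdist_def)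

lemma tdist_same[simp]: "tdist (a # u) (a # w) = tdist u w"
  using lcp_len_le[of u w] by (simp add: tdist_def)

lemma tdist_diff: "a \<noteq> b \<Longrightarrow> tdist (a # u) (b # w) = length u + length w + 2"
  by (simp add: tdist_def)

definition DD :: "'a tree \<Rightarrow> nat" where "DD t = (\<Sum>u\<in>vertices t. length u)"
definition SD :: "'a tree \<Rightarrow> nat" where "SD t = (\<Sum>u\<in>vertices t. \<Sum>w\<in>vertices t. tdist u w)"

lemma sum_Cons_image: "sum g (Cons a ` S) = (\<Sum>x\<in>S. g (a # x))"
  by (subst sum.reindex) (auto simp: inj_on_def)

lemma dsum_aux: "finite A \<Longrightarrow> finite B \<Longrightarrow>
  (\<Sum>x\<in>A. \<Sum>y\<in>B. Suc (Suc (f x + g y))) = card B * sum f A + card A * sum (g::_\<Rightarrow>nat) B + 2 * card A * card B"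
proof -
  assume f: "finite A" "finite B"
  have e: "Suc (Suc (f x + g y)) = f x + g y + 2" for x y by simp
  have "(\<Sum>x\<in>A. \<Sum>y\<in>B. Suc (Suc (f x + g y))) = (\<Sum>x\<in>A. card B * f x + sum g B + 2 * card B)"
    unfolding e sum.distrib sum_constant by (simp add: mult.commute)
  also have "\<dots> = card B * sum f A + card A * sum g B + 2 * card A * card B"
    by (simp add: sum.distrib sum_distrib_left)
  finally show ?thesis .
qed

lemma sum_Suc_aux: "finite S \<Longrightarrow> (\<Sum>x\<in>S. Suc (f x)) = sum f S + card S"
  by (induction rule: finite_induct) auto

lemma DD_Leaf[simp]: "DD Leaf = 0" and SD_Leaf[simp]: "SD Leaf = 0"
  by (simp_all add: DD_def SD_def)

lemma DD_Node: "DD (Node l x r) = DD l + size l + DD r + size r"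
proof -
  have d: "Cons False ` vertices l \<inter> Cons True ` vertices r = {}" by auto
  have nA: "[] \<notin> Cons False ` vertices l \<union> Cons True ` vertices r" by auto
  have fin: "finite (Cons False ` vertices l \<union> Cons True ` vertices r)" by simp
  have "DD (Node l x r) = (\<Sum>u\<in>Cons False ` vertices l. length u) + (\<Sum>u\<in>Cons True ` vertices r. length u)"
    unfolding DD_def vertices.simps sum.insert[OF fin nA] by (simp add: sum.union_disjoint d)
  also have "\<dots> = DD l + size l + DD r + size r"
    by (simp add: sum_Cons_image sum_Suc_aux DD_def card_vertices)
  finally show ?thesis .
qed

lemma SD_Node: "SD (Node l x r) = 2 * DD (Node l x r) + SD l + SD r
     + 2 * (size r * DD l + size l * DD r + 2 * size l * size r)"
proof -
  let ?A = "Cons False ` vertices l" and ?B = "Cons True ` vertices r"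
  have d: "?A \<inter> ?B = {}" by auto
  have nA: "[] \<notin> ?A \<union> ?B" by auto
  have fin: "finite (?A \<union> ?B)" by simp
  have V: "vertices (Node l x r) = insert [] (?A \<union> ?B)" by simp
  have DDt: "DD (Node l x r) = (\<Sum>w\<in>?A. length w) + (\<Sum>w\<in>?B. length w)"
    unfolding DD_def V sum.insert[OF fin nA] by (simp add: sum.union_disjoint d)
  have row: "(\<Sum>w\<in>vertices (Node l x r). tdist u w) = length u + (\<Sum>w\<in>?A. tdist u w) + (\<Sum>w\<in>?B. tdist u w)" for u
    unfolding V using nA by (simp add: sum.union_disjoint d)
  have AA: "(\<Sum>u\<in>?A. \<Sum>w\<in>?A. tdist u w) = SD l" by (simp add: sum_Cons_image SD_def)
  have BB: "(\<Sum>u\<in>?B. \<Sum>w\<in>?B. tdist u w) = SD r" by (simp add: sum_Cons_image SD_def)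
  have AB: "(\<Sum>u\<in>?A. \<Sum>w\<in>?B. tdist u w) = size r * DD l + size l * DD r + 2 * size l * size r"
    by (simp add: sum_Cons_image tdist_diff dsum_aux DD_def card_vertices)
  have BA: "(\<Sum>u\<in>?B. \<Sum>w\<in>?A. tdist u w) = size r * DD l + size l * DD r + 2 * size l * size r"
    by (simp add: sum_Cons_image tdist_diff dsum_aux DD_def card_vertices)
  have "SD (Node l x r) = (\<Sum>u\<in>insert [] (?A \<union> ?B). \<Sum>w\<in>vertices (Node l x r). tdist u w)"
    unfolding SD_def V ..
  also have "\<dots> = DD (Node l x r) + (\<Sum>u\<in>?A. \<Sum>w\<in>vertices (Node l x r). tdist u w)
      + (\<Sum>u\<in>?B. \<Sum>w\<in>vertices (Node l x r). tdist u w)"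
    using nA by (simp add: sum.union_disjoint d DD_def)
  also have "\<dots> = DD (Node l x r) + ((\<Sum>w\<in>?A. length w) + SD l + (size r * DD l + size l * DD r + 2 * size l * size r))
      + ((\<Sum>w\<in>?B. length w) + (size r * DD l + size l * DD r + 2 * size l * size r) + SD r)"
    unfolding row by (simp only: sum.distrib AA BB AB BA)
  also have "\<dots> = 2 * DD (Node l x r) + SD l + SD r
     + 2 * (size r * DD l + size l * DD r + 2 * size l * size r)" using DDt by simp
  finally show ?thesis .
qed


lemma pdist_pair: "pdist {u, w} = tdist u w"
  unfolding pdist_def
proof (rule the_equality)
  show "\<exists>u' w'. {u, w} = {u', w'} \<and> tdist u w = tdist u' w'" by blast
next
  fix d assume "\<exists>u' w'. {u, w} = {u', w'} \<and> d = tdist u' w'"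
  then obtain u' w' where "{u, w} = {u', w'}" "d = tdist u' w'" by blast
  then show "d = tdist u w" by (auto simp: doubleton_eq_iff tdist_sym)
qed

lemma card_vpairs: "card (vpairs t) = size t choose 2"
  unfolding vpairs_def using n_subsets[of "vertices t" 2] by (simp add: card_vertices)

lemma finite_vpairs[simp]: "finite (vpairs t)"
  unfolding vpairs_def by (rule finite_subset[of _ "Pow (vertices t)"]) auto

lemma wiener_SD: "SD t = 2 * wiener t"
proof -
  let ?V = "vertices t"
  let ?S = "{p \<in> ?V \<times> ?V. fst p \<noteq> snd p}"
  have fS: "finite ?S" by (rule finite_subset[of _ "?V \<times> ?V"]) auto
  have "SD t = (\<Sum>p\<in>?V \<times> ?V. tdist (fst p) (snd p))"
    unfolding SD_def sum.cartesian_product by (simp add: case_prod_beta)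
  also have "\<dots> = (\<Sum>p\<in>?S. tdist (fst p) (snd p))"
    by (rule sum.mono_neutral_right) auto
  also have "\<dots> = (\<Sum>e\<in>vpairs t. \<Sum>p\<in>{p \<in> ?S. {fst p, snd p} = e}. tdist (fst p) (snd p))"
    by (rule sum.group[symmetric]) (auto simp: vpairs_def fS)
  also have "\<dots> = (\<Sum>e\<in>vpairs t. 2 * pdist e)"
  proof (rule sum.cong[OF refl])
    fix e assume "e \<in> vpairs t"
    then obtain a b where ab: "a \<noteq> b" "e = {a, b}" "a \<in> ?V" "b \<in> ?V"
      unfolding vpairs_def by (auto simp: card_2_iff)
    have "{p \<in> ?S. {fst p, snd p} = e} = {(a, b), (b, a)}"
      using ab by (auto simp: doubleton_eq_iff)
    then show "(\<Sum>p\<in>{p \<in> ?S. {fst p, snd p} = e}. tdist (fst p) (snd p)) = 2 * pdist e"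
      using ab by (simp add: pdist_pair tdist_sym)
  qed
  also have "\<dots> = 2 * wiener t" by (simp add: wiener_def sum_distrib_left)
  finally show ?thesis .
qed

lemma bintrees_0: "bintrees 0 = {Leaf}"
  by (auto simp: bintrees_def)

definition mkN :: "nat \<times> unit tree \<times> unit tree \<Rightarrow> unit tree" where
  "mkN p = Node (fst (snd p)) () (snd (snd p))"

definition Dom :: "nat \<Rightarrow> (nat \<times> unit tree \<times> unit tree) set" where
  "Dom n = (SIGMA k:{..n}. bintrees k \<times> bintrees (n - k))"

lemma bintrees_Suc: "bintrees (Suc n) = mkN ` Dom n"
proof
  show "bintrees (Suc n) \<subseteq> mkN ` Dom n"
  proof
    fix t assume "t \<in> bintrees (Suc n)"
    then obtain l r where t: "t = Node l () r" "size l + size r = n"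
      by (cases t) (auto simp: bintrees_def)
    then show "t \<in> mkN ` Dom n"
      by (intro image_eqI[of _ _ "(size l, l, r)"]) (auto simp: mkN_def Dom_def bintrees_def)
  qed
  show "mkN ` Dom n \<subseteq> bintrees (Suc n)"
    by (auto simp: mkN_def Dom_def bintrees_def)
qed

lemma inj_mkN: "inj_on mkN (Dom n)"
  by (auto simp: inj_on_def mkN_def Dom_def bintrees_def)

lemma finite_bintrees[simp]: "finite (bintrees n)"
proof (induction n rule: less_induct)
  case (less n)
  show ?case
  proof (cases n)
    case 0 then show ?thesis by (simp add: bintrees_0)
  next
    case (Suc m)
    have "finite (Dom m)" unfolding Dom_def using less Suc
      by (intro finite_SigmaI finite_cartesian_product) auto
    then show ?thesis by (simp add: Suc bintrees_Suc)
  qed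
qed

lemma sum_bintrees_Suc:
  "(\<Sum>t\<in>bintrees (Suc n). g t) = (\<Sum>k\<le>n. \<Sum>l\<in>bintrees k. \<Sum>r\<in>bintrees (n - k). g (Node l () r))"
proof -
  have "(\<Sum>t\<in>bintrees (Suc n). g t) = (\<Sum>p\<in>Dom n. g (mkN p))"
    unfolding bintrees_Suc by (rule sum.reindex[OF inj_mkN, unfolded comp_def])
  also have "\<dots> = (\<Sum>k\<le>n. \<Sum>p\<in>bintrees k \<times> bintrees (n - k). g (mkN (k, p)))"
    unfolding Dom_def by (subst sum.Sigma) auto
  also have "\<dots> = (\<Sum>k\<le>n. \<Sum>l\<in>bintrees k. \<Sum>r\<in>bintrees (n - k). g (Node l () r))"
    by (simp add: sum.cartesian_product mkN_def case_prod_beta)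
  finally show ?thesis .
qed


definition Cn :: "nat \<Rightarrow> real" where "Cn n = real (card (bintrees n))"
definition Nn :: "nat \<Rightarrow> real" where "Nn n = real n * Cn n"
definition Dn :: "nat \<Rightarrow> real" where "Dn n = (\<Sum>t\<in>bintrees n. real (DD t))"
definition Sn :: "nat \<Rightarrow> real" where "Sn n = (\<Sum>t\<in>bintrees n. real (SD t))"

lemma dsum_real: "(\<Sum>x\<in>A. \<Sum>y\<in>B. \<alpha> + f x + g y) =
   real (card A) * real (card B) * \<alpha> + real (card B) * sum f A + real (card A) * (sum g B :: real)"
proof -
  have "(\<Sum>x\<in>A. \<Sum>y\<in>B. \<alpha> + f x + g y) = (\<Sum>x\<in>A. real (card B) * (\<alpha> + f x) + sum g B)"
    by (simp add: sum.distrib)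
  also have "\<dots> = real (card B) * (\<Sum>x\<in>A. (\<alpha> + f x)) + real (card A) * sum g B"
    by (simp add: sum.distrib sum_distrib_left[symmetric])
  also have "\<dots> = real (card A) * real (card B) * \<alpha> + real (card B) * sum f A + real (card A) * (sum g B :: real)"
    by (simp add: sum.distrib algebra_simps)
  finally show ?thesis .
qed

lemma Cn_0: "Cn 0 = 1" and Dn_0: "Dn 0 = 0" and Sn_0: "Sn 0 = 0"
  by (simp_all add: Cn_def Dn_def Sn_def bintrees_0)

lemma size_bintrees: "t \<in> bintrees n \<Longrightarrow> size t = n"
  by (simp add: bintrees_def)

lemma Cn_Suc: "Cn (Suc n) = (\<Sum>k\<le>n. Cn k * Cn (n - k))"
  unfolding Cn_def real_of_card sum_bintrees_Suc by simp

lemma Dn_Suc: "Dn (Suc n) = (\<Sum>k\<le>n. Dn k * Cn (n - k) + Nn k * Cn (n - k) + Cn k * Dn (n - k) + Cn k * Nn (n - k))"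
proof -
  have "Dn (Suc n) = (\<Sum>k\<le>n. \<Sum>l\<in>bintrees k. \<Sum>r\<in>bintrees (n - k).
          real n + real (DD l) + real (DD r))"
    unfolding Dn_def sum_bintrees_Suc
    by (intro sum.cong refl) (auto simp: DD_Node size_bintrees)
  also have "\<dots> = (\<Sum>k\<le>n. Dn k * Cn (n - k) + Nn k * Cn (n - k) + Cn k * Dn (n - k) + Cn k * Nn (n - k))"
    unfolding dsum_real
    by (intro sum.cong refl) (auto simp: Dn_def Cn_def Nn_def algebra_simps)
  finally show ?thesis .
qed

lemma Sn_Suc: "Sn (Suc n) = 2 * Dn (Suc n) + (\<Sum>k\<le>n. Sn k * Cn (n - k) + Cn k * Sn (n - k)
     + 2 * (Dn k * Nn (n - k) + Nn k * Dn (n - k) + 2 * (Nn k * Nn (n - k))))"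
proof -
  have "Sn (Suc n) = (\<Sum>k\<le>n. \<Sum>l\<in>bintrees k. \<Sum>r\<in>bintrees (n - k).
          (2 * real k + 2 * real (n - k) + 4 * real k * real (n - k)) + ((2 + 2 * real (n - k)) * real (DD l) + real (SD l))
          + ((2 + 2 * real k) * real (DD r) + real (SD r)))"
    unfolding Sn_def sum_bintrees_Suc
  proof (intro sum.cong refl)
    fix k l r assume "k \<in> {..n}" "l \<in> bintrees k" "r \<in> bintrees (n - k)"
    moreover obtain m where "n - k = m" by blast
    ultimately show "real (SD (Node l () r)) = (2 * real k + 2 * real (n - k) + 4 * real k * real (n - k))
      + ((2 + 2 * real (n - k)) * real (DD l) + real (SD l)) + ((2 + 2 * real k) * real (DD r) + real (SD r))"
      by (simp add: SD_Node DD_Node size_bintrees algebra_simps)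
  qed
  also have "\<dots> = (\<Sum>k\<le>n. 2 * (Dn k * Cn (n - k) + Nn k * Cn (n - k) + Cn k * Dn (n - k) + Cn k * Nn (n - k))
     + (Sn k * Cn (n - k) + Cn k * Sn (n - k)
     + 2 * (Dn k * Nn (n - k) + Nn k * Dn (n - k) + 2 * (Nn k * Nn (n - k)))))"
    unfolding dsum_real
  proof (intro sum.cong refl)
    fix k
    have e1: "(\<Sum>l\<in>bintrees k. (2 + 2 * real (n - k)) * real (DD l) + real (SD l)) = (2 + 2 * real (n - k)) * Dn k + Sn k"
      by (simp add: sum.distrib sum_distrib_left Dn_def Sn_def)
    have e2: "(\<Sum>l\<in>bintrees (n - k). (2 + 2 * real k) * real (DD l) + real (SD l)) = (2 + 2 * real k) * Dn (n - k) + Sn (n - k)"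
      by (simp add: sum.distrib sum_distrib_left Dn_def Sn_def)
    show "real (card (bintrees k)) * real (card (bintrees (n - k))) * (2 * real k + 2 * real (n - k) + 4 * real k * real (n - k)) +
         real (card (bintrees (n - k))) * (\<Sum>l\<in>bintrees k. (2 + 2 * real (n - k)) * real (DD l) + real (SD l)) +
         real (card (bintrees k)) * (\<Sum>l\<in>bintrees (n - k). (2 + 2 * real k) * real (DD l) + real (SD l)) =
         2 * (Dn k * Cn (n - k) + Nn k * Cn (n - k) + Cn k * Dn (n - k) + Cn k * Nn (n - k)) +
         (Sn k * Cn (n - k) + Cn k * Sn (n - k) + 2 * (Dn k * Nn (n - k) + Nn k * Dn (n - k) + 2 * (Nn k * Nn (n - k))))"
      unfolding e1 e2 Cn_def[symmetric] Nn_def by algebra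
  qed
  also have "\<dots> = 2 * Dn (Suc n) + (\<Sum>k\<le>n. Sn k * Cn (n - k) + Cn k * Sn (n - k)
     + 2 * (Dn k * Nn (n - k) + Nn k * Dn (n - k) + 2 * (Nn k * Nn (n - k))))"
    unfolding Dn_Suc by (simp add: sum.distrib sum_distrib_left)
  finally show ?thesis .
qed


abbreviation XX :: "real fps" where "XX \<equiv> fps_X"

lemma conv_nth: "fps_nth (Abs_fps f * Abs_fps h) n = (\<Sum>k\<le>n. f k * h (n - k))"
  by (simp add: fps_mult_nth atLeast0AtMost)

lemma num_mult_nth: "fps_nth (numeral k * f :: real fps) n = numeral k * fps_nth f n"
  by (simp add: numeral_fps_const)

lemma conv_sym: "(\<Sum>k\<le>(n::nat). f k * h (n - k)) = (\<Sum>k\<le>n. h k * (f (n - k) :: real))"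
  by (rule sum.reindex_bij_witness[of _ "\<lambda>k. n - k" "\<lambda>k. n - k"]) (auto simp: mult.commute diff_diff_cancel)

lemma conv_sym2: "(\<Sum>k\<le>(n::nat). c * (f k * h (n - k))) = (\<Sum>k\<le>n. c * (h k * (f (n - k) :: real)))"
  by (rule sum.reindex_bij_witness[of _ "\<lambda>k. n - k" "\<lambda>k. n - k"]) (auto simp: mult.commute diff_diff_cancel)

lemma nat_real_aux: "Suc n * y = (4 * n + 2) * z \<Longrightarrow> real (Suc n) * real y = (4 * real n + 2) * real z"
proof -
  assume "Suc n * y = (4 * n + 2) * z"
  then have "real (Suc n * y) = real ((4 * n + 2) * z)" by (rule arg_cong)
  then show ?thesis by (simp add: algebra_simps)
qed

definition cF :: "real fps" where "cF = Abs_fps Cn"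
definition dF :: "real fps" where "dF = Abs_fps Dn"
definition sF :: "real fps" where "sF = Abs_fps Sn"
definition nF :: "real fps" where "nF = Abs_fps Nn"
definition aF :: "real fps" where "aF = Abs_fps (\<lambda>n. real ((2 * n) choose n))"
definition gF :: "real fps" where "gF = Abs_fps (\<lambda>n. 4 ^ n)"
definition tF :: "real fps" where "tF = Abs_fps (\<lambda>n. (real n + 2) * 4 ^ n - 2 * (2 * real n + 1) * real ((2 * n) choose n))"

lemma c_eq: "cF = 1 + XX * (cF * cF)"
proof (rule fps_ext)
  fix n show "fps_nth cF n = fps_nth (1 + XX * (cF * cF)) n"
    by (cases n) (simp_all add: cF_def Cn_0 Cn_Suc conv_nth)
qed

lemma n_eq: "nF = XX * fps_deriv cF"
proof (rule fps_ext)
  fix n show "fps_nth nF n = fps_nth (XX * fps_deriv cF) n"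
    by (cases n) (simp_all add: cF_def nF_def Nn_def)
qed

lemma d_eq: "dF = XX * (dF * cF + nF * cF + cF * dF + cF * nF)"
proof (rule fps_ext)
  fix n show "fps_nth dF n = fps_nth (XX * (dF * cF + nF * cF + cF * dF + cF * nF)) n"
    by (cases n) (simp_all add: cF_def dF_def nF_def Dn_0 Dn_Suc conv_nth sum.distrib conv_sym[of Cn Dn] conv_sym[of Cn Nn])
qed

lemma s_eq: "sF = 2 * dF + XX * (sF * cF + cF * sF + 2 * (dF * nF + nF * dF + 2 * (nF * nF)))"
proof (rule fps_ext)
  fix n show "fps_nth sF n = fps_nth (2 * dF + XX * (sF * cF + cF * sF + 2 * (dF * nF + nF * dF + 2 * (nF * nF)))) n"
    by (cases n) (simp_all add: cF_def dF_def nF_def sF_def Sn_0 Dn_0 Sn_Suc conv_nth sum.distrib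
        num_mult_nth sum_distrib_left conv_sym[of Cn Sn] conv_sym2[of _ Nn Dn])
qed

lemma cbinom: "real (Suc n) * real ((2 * Suc n) choose Suc n) = (4 * real n + 2) * real ((2 * n) choose n)"
proof -
  have e1: "Suc n * (Suc (Suc (2 * n)) choose Suc n) = Suc (Suc (2 * n)) * (Suc (2 * n) choose n)"
    by (rule Suc_times_binomial)
  have e2: "Suc n * (Suc (2 * n) choose Suc n) = Suc (2 * n) * ((2 * n) choose n)"
    by (rule Suc_times_binomial)
  have sym: "(Suc (2 * n) choose n) = (Suc (2 * n) choose Suc n)"
    using binomial_symmetric[of n "Suc (2 * n)"] by (simp add: Suc_diff_le)
  have "Suc n * (Suc (Suc (2 * n)) choose Suc n) = Suc n * (2 * (Suc (2 * n) choose n))"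
    using e1 by simp
  then have b: "(Suc (Suc (2 * n)) choose Suc n) = 2 * (Suc (2 * n) choose Suc n)"
    using sym by simp
  have "Suc n * ((2 * Suc n) choose Suc n) = (4 * n + 2) * ((2 * n) choose n)"
    using b e2 by (simp add: algebra_simps)
  then show ?thesis by (rule nat_real_aux)
qed

lemma a_ode: "fps_deriv aF = 4 * (XX * fps_deriv aF) + 2 * aF"
proof (rule fps_ext)
  fix n show "fps_nth (fps_deriv aF) n = fps_nth (4 * (XX * fps_deriv aF) + 2 * aF) n"
  proof (cases n)
    case 0 then show ?thesis by (simp add: aF_def num_mult_nth)
  next
    case (Suc m)
    have "real (Suc (Suc m)) * real ((2 * Suc (Suc m)) choose Suc (Suc m))
        = (4 * real (Suc m) + 2) * real ((2 * Suc m) choose Suc m)"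
      by (rule cbinom)
    then show ?thesis using Suc by (simp add: aF_def num_mult_nth algebra_simps)
  qed
qed

lemma g_eq: "gF = 1 + 4 * (XX * gF)"
proof (rule fps_ext)
  fix n show "fps_nth gF n = fps_nth (1 + 4 * (XX * gF)) n"
    by (cases n) (simp_all add: gF_def num_mult_nth)
qed

lemma t_eq: "tF = XX * fps_deriv gF + 2 * gF - 2 * (2 * (XX * fps_deriv aF) + aF)"
proof (rule fps_ext)
  fix n show "fps_nth tF n = fps_nth (XX * fps_deriv gF + 2 * gF - 2 * (2 * (XX * fps_deriv aF) + aF)) n"
    by (cases n) (simp_all add: tF_def gF_def aF_def num_mult_nth algebra_simps)
qed


lemma alg_core:
  fixes X c a g d sg nf :: "'a::idom"
  assumes A: "X*(c*c) = c - 1" and S: "a * (1 - 2*X*c) = 1" and G: "g = a*a" and K: "c*(a+1) = 2*a"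
    and X4: "4*X*(a*a) = a*a - 1" and XC: "2*X*c*a = a - 1"
    and N: "nf = a - c" and D: "d = 2*X*nf*c*a" and SG: "sg = a*(2*d + 4*X*(d*nf + nf*nf))"
  shows "sg = 4*X*g*g + 2*g - 8*X*a*g - 2*a"
  using assms by algebra

lemma two_cancel: "(2::real fps) * x = 2 * y \<Longrightarrow> x = y"
  using mult_cancel_left[of "2::real fps" x y] by simp

definition sS :: "real fps" where "sS = 1 - 2 * XX * cF"

lemma s2: "sS * sS = 1 - 4 * XX"
proof -
  have "XX * (cF * cF) = cF - 1" using c_eq by (simp add: algebra_simps)
  then show ?thesis unfolding sS_def by algebra
qed

lemma s0: "fps_nth sS 0 = 1"
  by (simp add: sS_def num_mult_nth)

lemma a0: "fps_nth aF 0 = 1"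
  by (simp add: aF_def)

lemma sds: "sS * fps_deriv sS = -2"
proof -
  have "fps_deriv (sS * sS) = fps_deriv (1 - 4 * XX)" using s2 by simp
  then have "2 * (sS * fps_deriv sS) = -4" by (simp add: algebra_simps)
  then have "2 * (sS * fps_deriv sS) = 2 * (-2)" by simp
  then show ?thesis by (rule two_cancel)
qed

lemma aS: "aF * sS = 1"
proof -
  let ?p = "aF * sS"
  have "fps_deriv ?p * sS = fps_deriv aF * (sS * sS) + aF * (sS * fps_deriv sS)"
    by (simp add: algebra_simps)
  also have "\<dots> = fps_deriv aF * (1 - 4 * XX) - 2 * aF" by (simp add: s2 sds)
  also have "\<dots> = 0" using a_ode by (simp add: algebra_simps)
  finally have h: "fps_deriv ?p * sS = 0" .
  have "fps_deriv ?p = fps_deriv ?p * (sS * inverse sS)"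
    using inverse_mult_eq_1'[of sS] s0 by simp
  also have "\<dots> = 0" using h by (simp add: mult.assoc[symmetric])
  finally have "fps_deriv ?p = 0" .
  then have "?p = fps_const (fps_nth ?p 0)" by (simp only: fps_deriv_eq_0_iff)
  also have "fps_nth ?p 0 = 1" by (simp add: a0 s0)
  finally show ?thesis by simp
qed

lemma ds: "fps_deriv sS = -2 * aF"
proof -
  have "fps_deriv sS = (aF * sS) * fps_deriv sS" by (simp add: aS)
  also have "\<dots> = aF * (sS * fps_deriv sS)" by (simp add: mult.assoc)
  finally show ?thesis by (simp add: sds)
qed

lemma nF_eq: "nF = aF - cF"
proof -
  have "fps_deriv sS = - 2 * (cF + XX * fps_deriv cF)"
    by (simp add: sS_def algebra_simps)
  then have "2 * (cF + XX * fps_deriv cF) = 2 * aF" using ds by algebra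
  then have "cF + XX * fps_deriv cF = aF" by (rule two_cancel)
  then show ?thesis using n_eq by (metis add_diff_cancel_left')
qed

lemma gA: "gF * (1 - 4 * XX) = 1"
  using g_eq by (simp add: algebra_simps)

lemma aa: "aF * aF * (1 - 4 * XX) = 1"
proof -
  have "aF * aF * (1 - 4 * XX) = (aF * sS) * (aF * sS)" unfolding s2[symmetric] by (simp only: mult_ac)
  then show ?thesis by (simp add: aS)
qed

lemma gaa: "gF = aF * aF"
proof -
  have "gF = gF * (aF * aF * (1 - 4 * XX))" by (simp add: aa)
  also have "\<dots> = aF * aF * (gF * (1 - 4 * XX))" by (simp add: mult_ac)
  finally show ?thesis by (simp add: gA)
qed

lemma K: "cF * (aF + 1) = 2 * aF"
proof -
  have "XX * (2 * (cF * (aF + 1) - 2 * aF)) = 0"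
    using aS aa unfolding sS_def by algebra
  then have "2 * (cF * (aF + 1) - 2 * aF) = 0" by simp
  then have "2 * (cF * (aF + 1)) = 2 * (2 * aF)" by algebra
  then show ?thesis by (rule two_cancel)
qed

lemma dform: "dF = 2 * XX * nF * cF * aF"
proof -
  have h: "dF * sS = 2 * XX * nF * cF" using d_eq unfolding sS_def by algebra
  show ?thesis using h aS by algebra
qed

lemma sform: "sF = aF * (2 * dF + 4 * XX * (dF * nF + nF * nF))"
proof -
  have h: "sF * sS = 2 * dF + 4 * XX * (dF * nF + nF * nF)" using s_eq unfolding sS_def by algebra
  show ?thesis using h aS by algebra
qed

lemma dg: "fps_deriv gF = 4 * gF * gF"
proof -
  have "fps_deriv gF = 4 * gF + 4 * XX * fps_deriv gF"
    using arg_cong[OF g_eq, of fps_deriv] by (simp add: algebra_simps)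
  then have "fps_deriv gF * (1 - 4 * XX) = 4 * gF" by (simp add: algebra_simps)
  then have "fps_deriv gF * (gF * (1 - 4 * XX)) = 4 * gF * gF" by (simp add: mult_ac)
  then show ?thesis by (simp add: gA)
qed

lemma da: "fps_deriv aF = 2 * aF * gF"
proof -
  have "fps_deriv aF * (1 - 4 * XX) = 2 * aF" using a_ode by (simp add: algebra_simps)
  then have "fps_deriv aF * (gF * (1 - 4 * XX)) = 2 * aF * gF" by (simp add: mult_ac)
  then show ?thesis by (simp add: gA)
qed

lemma sF_tF: "sF = tF"
proof -
  have t: "tF = 4 * XX * gF * gF + 2 * gF - 8 * XX * aF * gF - 2 * aF"
    unfolding t_eq dg da by (simp add: algebra_simps)
  have A: "XX * (cF * cF) = cF - 1" using c_eq by (simp add: algebra_simps)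
  have S: "aF * (1 - 2 * XX * cF) = 1" using aS by (simp add: sS_def)
  have X4: "4 * XX * (aF * aF) = aF * aF - 1" using aa by algebra
  have XC: "2 * XX * cF * aF = aF - 1" using S by algebra
  show ?thesis unfolding t
    by (rule alg_core[OF A S gaa K X4 XC nF_eq dform sform])
qed

lemma Sn_closed: "Sn n = (real n + 2) * 4 ^ n - 2 * (2 * real n + 1) * real ((2 * n) choose n)"
  using arg_cong[OF sF_tF, of "\<lambda>f. fps_nth f n"] by (simp add: sF_def tF_def)

lemma Cn_closed: "Cn n = real ((2 * n) choose n) / (real n + 1)"
proof -
  have "cF + XX * fps_deriv cF = aF" using nF_eq n_eq by algebra
  then have "fps_nth (cF + XX * fps_deriv cF) n = fps_nth aF n" by simp
  then have "Cn n + real n * Cn n = real ((2 * n) choose n)"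
    by (cases n) (simp_all add: cF_def aF_def)
  then show ?thesis by (simp add: field_simps)
qed


lemma tw_Sn: "real (total_wiener n) = Sn n / 2"
proof -
  have "real (total_wiener n) = (\<Sum>t\<in>bintrees n. real (SD t) / 2)"
    by (simp add: total_wiener_def wiener_SD)
  also have "\<dots> = Sn n / 2" by (simp add: Sn_def sum_divide_distrib)
  finally show ?thesis .
qed

lemma tw_closed: "real (total_wiener n) = (real n + 2) / 2 * 4 ^ n - (2 * real n + 1) * real ((2 * n) choose n)"
  by (simp add: tw_Sn Sn_closed field_simps)

lemma fact_ratio: "fact (2 * n + 1) / (fact n) ^ 2 = (2 * real n + 1) * real ((2 * n) choose n)"
proof -
  have A: "real ((2 * n) choose n) = fact (2 * n) / (fact n * fact n)"
    using binomial_fact[of n "2 * n", where 'a = real] by simp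
  have B: "fact (2 * n + 1) = (2 * real n + 1) * (fact (2 * n) :: real)"
    by (simp add: algebra_simps)
  show ?thesis by (simp only: A B power2_eq_square) simp
qed

lemma part1: "real (total_wiener n) = (real n + 2) / 2 * 4 ^ n - fact (2 * n + 1) / (fact n) ^ 2"
  unfolding fact_ratio by (rule tw_closed)

lemma card_bintrees: "real (card (bintrees n)) = real ((2 * n) choose n) / (real n + 1)"
  using Cn_closed by (simp add: Cn_def)

lemma num_pairs_eq: "num_pairs n = card (bintrees n) * (n choose 2)"
proof -
  have "{(t, e). t \<in> bintrees n \<and> e \<in> vpairs t} = Sigma (bintrees n) vpairs" by auto
  then have "num_pairs n = (\<Sum>t\<in>bintrees n. card (vpairs t))"
    by (simp add: num_pairs_def card_SigmaI)
  also have "\<dots> = (\<Sum>t\<in>bintrees n. n choose 2)"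
    by (intro sum.cong refl) (simp add: card_vpairs size_bintrees)
  finally show ?thesis by simp
qed

lemma part3: "real (num_pairs n) = real (n choose 2) * (1 / (real n + 1)) * real ((2 * n) choose n)"
  by (simp add: num_pairs_eq card_bintrees)

lemma g32: "((-3/2::real) gchoose n) * (-4) ^ n = (2 * real n + 1) * real ((2 * n) choose n)"
proof (induction n)
  case 0 then show ?case by simp
next
  case (Suc n)
  let ?a = "-3/2::real"
  define G where "G = ?a gchoose n"
  define G' where "G' = ?a gchoose Suc n"
  define B where "B = real ((2 * n) choose n)"
  define B' where "B' = real ((2 * Suc n) choose Suc n)"
  have m1: "real (Suc n) * G' = (?a - real n) * G"
    using gbinomial_mult_1[of ?a n] unfolding G_def G'_def by (simp add: algebra_simps)
  have cb: "real (Suc n) * B' = (4 * real n + 2) * B"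
    unfolding B_def B'_def by (rule cbinom)
  have IH: "G * (-4) ^ n = (2 * real n + 1) * B" using Suc.IH unfolding G_def B_def .
  have "real (Suc n) * (G' * (-4) ^ Suc n) = (real (Suc n) * G') * ((-4) * (-4)^n)"
    by (simp only: power_Suc mult_ac)
  also have "\<dots> = (?a - real n) * (-4) * (G * (-4) ^ n)"
    unfolding m1 by (simp only: mult_ac)
  also have "\<dots> = (2 * real n + 3) * ((4 * real n + 2) * B)"
    unfolding IH by (simp add: algebra_simps)
  also have "\<dots> = real (Suc n) * ((2 * real (Suc n) + 1) * B')"
    unfolding cb[symmetric] by (simp add: algebra_simps)
  finally have "real (Suc n) * (G' * (-4) ^ Suc n) = real (Suc n) * ((2 * real (Suc n) + 1) * B')" .
  then have "G' * (-4) ^ Suc n = (2 * real (Suc n) + 1) * B'"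
    by (metis mult_cancel_left of_nat_eq_0_iff nat.distinct(1))
  then show ?case unfolding G'_def B'_def .
qed

lemma powr_32: assumes "u > 0" shows "u powr (-3/2) = sqrt u / u ^ 2"
proof -
  have "u powr (3/2) = u powr (1 + 1/2)" by simp
  also have "\<dots> = u powr 1 * u powr (1/2)" by (rule powr_add)
  also have "\<dots> = u * sqrt u" using assms by (simp add: powr_half_sqrt)
  finally have a: "u powr (3/2) = u * sqrt u" .
  have b: "u powr (-3/2) = inverse (u powr (3/2))" using assms by (simp add: powr_minus[symmetric])
  have c: "sqrt u * sqrt u = u" using assms by simp
  have d: "sqrt u > 0" using assms by simp
  have "sqrt u / u ^ 2 = sqrt u / (u * (sqrt u * sqrt u))" using c by (simp add: power2_eq_square)
  also have "\<dots> = inverse (u * sqrt u)" using d assms by (simp add: field_simps)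
  finally show ?thesis using a b by simp
qed
lemma field_aux: "(u::real) > 0 \<Longrightarrow> (1/2) * (1 / u ^ 2 + 1 / u) - r / u ^ 2 = ((1 + u) / 2 - r) / u ^ 2"
  by (simp add: field_simps power2_eq_square)

lemma part2g:
  fixes x :: real and T :: "nat \<Rightarrow> real" assumes x: "\<bar>x\<bar> < 1/4"
  and tw_closed: "\<And>n. T n = (real n + 2) / 2 * 4 ^ n - (2 * real n + 1) * real ((2 * n) choose n)"
  and g32: "\<And>n. ((-3/2::real) gchoose n) * (-4) ^ n = (2 * real n + 1) * real ((2 * n) choose n)"
  and powr_32: "\<And>u::real. u > 0 \<Longrightarrow> u powr (-3/2) = sqrt u / u ^ 2"
  shows "(\<lambda>n. T n * x ^ n) sums ((1 - sqrt (1 - 4 * x) - 2 * x) / (1 - 4 * x) ^ 2)"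
proof -
  have y: "norm (4 * x) < 1" using x by simp
  have s1: "(\<lambda>n. real (Suc n) * (4 * x) ^ n) sums (1 / (1 - 4 * x) ^ 2)"
    using geometric_deriv_sums[OF y] by simp
  have s2: "(\<lambda>n. (4 * x) ^ n) sums (1 / (1 - 4 * x))"
    using geometric_sums[OF y] by simp
  have z: "\<bar>-4 * x\<bar> < 1" using x by simp
  have s3: "(\<lambda>n. (2 * real n + 1) * real ((2 * n) choose n) * x ^ n) sums ((1 - 4 * x) powr (-3/2))"
  proof -
    have "(\<lambda>n. ((-3/2) gchoose n) * (-4 * x) ^ n) sums ((1 + -4 * x) powr (-3/2))"
      by (rule gen_binomial_real[OF z])
    moreover have "((-3/2::real) gchoose n) * (-4 * x) ^ n = (2 * real n + 1) * real ((2 * n) choose n) * x ^ n" for n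
      by (simp only: power_mult_distrib mult.assoc[symmetric] g32)
    ultimately show ?thesis by simp
  qed
  have "(\<lambda>n. (1/2) * (real (Suc n) * (4 * x) ^ n + (4 * x) ^ n)
         - (2 * real n + 1) * real ((2 * n) choose n) * x ^ n)
        sums ((1/2) * (1 / (1 - 4 * x) ^ 2 + 1 / (1 - 4 * x)) - (1 - 4 * x) powr (-3/2))"
    by (intro sums_diff sums_mult sums_add s1 s2 s3)
  moreover have "(1/2) * (real (Suc n) * (4 * x) ^ n + (4 * x) ^ n)
         - (2 * real n + 1) * real ((2 * n) choose n) * x ^ n = T n * x ^ n" for n
    by (simp add: tw_closed power_mult_distrib algebra_simps)
  moreover have "(1/2) * (1 / (1 - 4 * x) ^ 2 + 1 / (1 - 4 * x)) - (1 - 4 * x) powr (-3/2)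
      = (1 - sqrt (1 - 4 * x) - 2 * x) / (1 - 4 * x) ^ 2"
  proof -
    have u: "1 - 4 * x > 0" using x by simp
    have "(1 - 4 * x) powr (-3/2) = sqrt (1 - 4 * x) / (1 - 4 * x) ^ 2" by (rule powr_32[OF u])
    then have "(1/2) * (1 / (1 - 4 * x) ^ 2 + 1 / (1 - 4 * x)) - (1 - 4 * x) powr (-3/2)
      = ((1 + (1 - 4 * x)) / 2 - sqrt (1 - 4 * x)) / (1 - 4 * x) ^ 2"
      using field_aux[OF u] by simp
    also have "(1 + (1 - 4 * x)) / 2 - sqrt (1 - 4 * x) = 1 - sqrt (1 - 4 * x) - 2 * x" by simp
    finally show ?thesis .
  qed
  ultimately show ?thesis by simp
qed

lemma part2:
  fixes x :: real assumes x: "\<bar>x\<bar> < 1/4"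
  shows "(\<lambda>n. real (total_wiener n) * x ^ n) sums ((1 - sqrt (1 - 4 * x) - 2 * x) / (1 - 4 * x) ^ 2)"
  by (rule part2g[OF x tw_closed g32 powr_32])


definition qq :: "nat \<Rightarrow> real" where "qq n = real ((2 * n) choose n) / 4 ^ n"

lemma qq_pos: "qq n > 0"
  by (simp add: qq_def)

lemma aux3: "(n::real) \<ge> 0 \<Longrightarrow> F > 0 \<Longrightarrow> ((4*n+2)*B/(n+1)) / (4*F) = (B/F) * (2*n+1)/(2*n+2)"
proof -
  assume a: "n \<ge> 0" "F > 0"
  have "n + 1 \<noteq> 0" "F \<noteq> 0" "2*n+2 \<noteq> 0" using a by auto
  then show ?thesis by (simp add: divide_simps) (simp add: algebra_simps)
qed

lemma qq_Suc: "qq (Suc n) = qq n * (2 * real n + 1) / (2 * real n + 2)"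
proof -
  define B where "B = real ((2 * n) choose n)"
  define B' where "B' = real ((2 * Suc n) choose Suc n)"
  have cb: "real (Suc n) * B' = (4 * real n + 2) * B"
    unfolding B_def B'_def by (rule cbinom)
  have e: "B' = (4 * real n + 2) * B / (real n + 1)"
    using cb by (simp add: field_simps)
  have "qq (Suc n) = B' / 4 ^ Suc n" unfolding qq_def B'_def by (rule refl)
  moreover have "qq n = B / 4 ^ n" unfolding qq_def B_def by (rule refl)
  moreover have "B' / 4 ^ Suc n = (B / 4 ^ n) * (2 * real n + 1) / (2 * real n + 2)"
    unfolding e power_Suc by (rule aux3) simp_all
  ultimately show ?thesis by simp
qed

definition PP :: "nat \<Rightarrow> real" where "PP n = (\<Prod>k=1..n. (4*real k^2) / (4*real k^2 - 1))"

lemma PP_Suc: "PP (Suc n) = PP n * ((4*real (Suc n)^2) / (4*real (Suc n)^2 - 1))"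
  unfolding PP_def by (simp add: prod.cl_ivl_Suc)

lemma PP_qq: "PP n = 1 / ((2 * real n + 1) * qq n ^ 2)"
proof (induction n)
  case 0 then show ?case by (simp add: PP_def qq_def)
next
  case (Suc n)
  have q: "qq n > 0" by (rule qq_pos)
  have d: "4 * real (Suc n) ^ 2 - 1 = (2 * real n + 1) * (2 * real n + 3)"
    by (simp add: power2_eq_square algebra_simps)
  show ?case unfolding PP_Suc Suc.IH qq_Suc d using q
    by (simp add: field_simps power2_eq_square)
qed

lemma PP_lim: "PP \<longlonglongrightarrow> pi / 2"
  unfolding PP_def by (rule wallis)

lemma PP_inc: "incseq PP"
proof (rule incseq_SucI)
  fix n
  have "PP n \<ge> 0" by (simp add: PP_qq)
  moreover have "(4*real (Suc n)^2) / (4*real (Suc n)^2 - 1) \<ge> 1"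
  proof -
    have "real (Suc n) ^ 2 \<ge> 1" by simp
    then have pos: "4*real (Suc n)^2 - 1 > 0" by linarith
    then show ?thesis by (simp add: le_divide_eq)
  qed
  ultimately show "PP n \<le> PP (Suc n)" unfolding PP_Suc
    by (metis mult_left_mono mult.right_neutral)
qed

lemma qq_lower: "2 / pi \<le> (2 * real n + 1) * qq n ^ 2"
proof -
  have "PP n \<le> pi / 2" by (rule incseq_le[OF PP_inc PP_lim])
  then have "1 / ((2 * real n + 1) * qq n ^ 2) \<le> pi / 2" by (simp add: PP_qq)
  moreover have "(2 * real n + 1) * qq n ^ 2 > 0" using qq_pos[of n] by simp
  ultimately show ?thesis using pi_gt_zero by (simp add: field_simps)
qed

definition QQ :: "nat \<Rightarrow> real" where "QQ m = PP (Suc m) * ((2 * real m + 3) / (2 * real m + 2))"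

lemma aux1: "(a::real) > 0 \<Longrightarrow> b > 0 \<Longrightarrow> q > 0 \<Longrightarrow> 1 / (a * q ^ 2) * (a / b) = 1 / (b * q ^ 2)"
  by (simp add: field_simps)

lemma aux2: "(c::real) > 0 \<Longrightarrow> c * (q * a / c) ^ 2 = q ^ 2 * (a ^ 2 / c)"
  by (simp add: field_simps power2_eq_square)

lemma QQ_qq: "QQ m = 1 / ((2 * real m + 2) * qq (Suc m) ^ 2)"
proof -
  have q: "qq (Suc m) > 0" by (rule qq_pos)
  have p1: "2 * real m + 3 > 0" and p2: "2 * real m + 2 > 0" by simp_all
  have e: "2 * real (Suc m) + 1 = 2 * real m + 3" by simp
  show ?thesis unfolding QQ_def PP_qq e by (rule aux1[OF p1 p2 q])
qed

lemma QQ_dec: "decseq QQ"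
proof (rule decseq_SucI)
  fix m
  let ?q = "qq (Suc m)"
  have q: "?q > 0" by (rule qq_pos)
  have e: "qq (Suc (Suc m)) = ?q * (2 * real m + 3) / (2 * real m + 4)"
    using qq_Suc[of "Suc m"] by (simp add: algebra_simps)
  have p4: "2 * real m + 4 > 0" by simp
  have h: "(2 * real m + 2) * (2 * real m + 4) \<le> (2 * real m + 3) ^ 2"
    by (simp add: power2_eq_square algebra_simps)
  have h1: "2 * real m + 2 \<le> (2 * real m + 3) ^ 2 / (2 * real m + 4)"
    using h p4 by (simp add: le_divide_eq)
  have r: "(2 * real (Suc m) + 2) * qq (Suc (Suc m)) ^ 2 = ?q ^ 2 * ((2 * real m + 3) ^ 2 / (2 * real m + 4))"
  proof -
    have "2 * real (Suc m) + 2 = 2 * real m + 4" by simp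
    then show ?thesis unfolding e by (simp only: aux2[OF p4])
  qed
  have "(2 * real m + 2) * ?q ^ 2 \<le> (2 * real (Suc m) + 2) * qq (Suc (Suc m)) ^ 2"
    unfolding r using mult_left_mono[OF h1, of "?q ^ 2"] by (simp add: mult.commute)
  moreover have "(2 * real m + 2) * ?q ^ 2 > 0" using q by simp
  ultimately show "QQ (Suc m) \<le> QQ m" unfolding QQ_qq
    by (simp add: frac_le)
qed

lemma QQ_lim: "QQ \<longlonglongrightarrow> pi / 2"
proof -
  have "(\<lambda>m. PP (Suc m)) \<longlonglongrightarrow> pi / 2" using PP_lim by (rule LIMSEQ_Suc)
  moreover have "(\<lambda>m. (2 * real m + 3) / (2 * real m + 2)) \<longlonglongrightarrow> 1" by real_asymp
  ultimately have "(\<lambda>m. PP (Suc m) * ((2 * real m + 3) / (2 * real m + 2))) \<longlonglongrightarrow> pi / 2 * 1"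
    by (rule tendsto_mult)
  then show ?thesis unfolding QQ_def by simp
qed

lemma qq_upper: "n \<ge> 1 \<Longrightarrow> real n * qq n ^ 2 \<le> 1 / pi"
proof -
  assume "n \<ge> 1"
  then obtain m where n: "n = Suc m" by (cases n) auto
  have "pi / 2 \<le> QQ m" by (rule decseq_ge[OF QQ_dec QQ_lim])
  then have "pi / 2 \<le> 1 / ((2 * real m + 2) * qq n ^ 2)" by (simp add: QQ_qq n)
  moreover have "(2 * real m + 2) * qq n ^ 2 > 0" using qq_pos[of n] by simp
  ultimately have "pi * ((2 * real m + 2) * qq n ^ 2) \<le> 2"
    by (simp add: field_simps)
  then show ?thesis using pi_gt_zero by (simp add: n field_simps)
qed


lemma ident_aux: "(D::real) \<noteq> 0 \<Longrightarrow> A - B - R*Z + W = (R - 4)*D \<Longrightarrow>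
   A/D - B/D - (a-4) = (R - a) + R*(Z/D) - W/D"
proof -
  assume D: "D \<noteq> 0" and h: "A - B - R*Z + W = (R - 4)*D"
  have "A/D - B/D - R*(Z/D) + W/D = (A - B - R*Z + W)/D" using D by (simp add: field_simps)
  also have "\<dots> = R - 4" using D h by simp
  finally show ?thesis by (simp add: algebra_simps)
qed

lemma final_abs:
  fixes N R a s :: real
  assumes N: "N \<ge> 2" and s: "s = sqrt N" and a: "a = sqrt (pi * N)" and lo: "a \<le> R"
    and up: "R^2 \<le> pi*N + pi/2"
  shows "\<bar>(N+1)*(N+2)*R/(N*(N-1)) - 2*(2*N+1)*(N+1)/(N*(N-1)) - (a - 4)\<bar> \<le> 53 / s"
proof -
  have s2: "s^2 = N" using N s by simp
  have spos: "s > 0" using N s by simp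
  have s1: "s \<ge> 1" using N s by simp
  have a2: "a^2 = pi * N" using N a by simp
  have "N \<le> pi * N" using mult_right_mono[of 1 pi N] pi_ge_two N by simp
  then have a_ge: "a \<ge> s" unfolding a s by (rule real_sqrt_le_mono)
  have apos: "a > 0" using a_ge spos by linarith
  have d1: "0 \<le> R - a" using lo by simp
  have "(R - a) * (2 * a) \<le> (R - a) * (R + a)" using d1 lo by (intro mult_left_mono) auto
  also have "\<dots> = R^2 - a^2" by (simp add: power2_eq_square algebra_simps)
  also have "\<dots> \<le> pi / 2" using up a2 by simp
  finally have d2: "(R - a) * (2 * a) \<le> pi / 2" .
  have "R - a \<le> pi / (4 * a)" using d2 apos by (simp add: field_simps)
  also have "\<dots> \<le> pi / (4 * s)" using a_ge spos by (intro divide_left_mono) auto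
  also have "\<dots> \<le> 4 / (4 * s)" using spos pi_less_4 by (intro divide_right_mono) auto
  finally have e1: "R - a \<le> 1 / s" by simp
  have "pi * N \<le> 4 * N" using mult_right_mono[of pi 4 N] pi_less_4 N by simp
  moreover have "(3 * s)^2 = 9 * N" using s2 by (simp add: power_mult_distrib)
  moreover have "pi / 2 \<le> 2" using pi_less_4 by simp
  ultimately have Rsq: "R^2 \<le> (3 * s)^2" using up N by linarith
  have R3: "R \<le> 3 * s" by (rule power2_le_imp_le[OF Rsq]) (use spos in linarith)
  have Rpos: "R \<ge> 0" using lo apos by simp
  have Nn: "N * (N - 1) > 0" using N by simp
  have ident: "(N+1)*(N+2)*R/(N*(N-1)) - 2*(2*N+1)*(N+1)/(N*(N-1)) - (a - 4)
      = (R - a) + R * ((4*N+2)/(N*(N-1))) - (10*N+2)/(N*(N-1))"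
    using Nn N by (intro ident_aux) (simp_all add: algebra_simps)
  have f1: "(4*N+2)/(N*(N-1)) \<le> 10 / N" using Nn N by (simp add: field_simps)
  have f1': "0 \<le> (4*N+2)/(N*(N-1))" using Nn N by simp
  have "R * ((4*N+2)/(N*(N-1))) \<le> (3 * s) * (10 / N)" using R3 f1 f1' Rpos by (intro mult_mono) auto
  also have "\<dots> = 30 / s"
  proof -
    have Nss: "N = s * s" using s2 by (simp add: power2_eq_square)
    show ?thesis unfolding Nss using spos by (simp add: field_simps)
  qed
  finally have t2: "R * ((4*N+2)/(N*(N-1))) \<le> 30 / s" .
  have t2': "0 \<le> R * ((4*N+2)/(N*(N-1)))" using Rpos f1' by (rule mult_nonneg_nonneg)
  have "(10*N+2)/(N*(N-1)) \<le> 22 / N" using Nn N by (simp add: field_simps)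
  also have "\<dots> \<le> 22 / s" using s2 s1 spos by (intro divide_left_mono) (auto simp: power2_eq_square)
  finally have t3: "(10*N+2)/(N*(N-1)) \<le> 22 / s" .
  have t3': "0 \<le> (10*N+2)/(N*(N-1))" using Nn N by simp
  have "53 / s = 1 / s + 30 / s + 22 / s" by (simp add: field_simps)
  then show ?thesis unfolding ident abs_le_iff using e1 d1 t2 t2' t3 t3' by linarith
qed

lemma choose2_real: "real (n choose 2) = real n * (real n - 1) / 2"
proof (cases n)
  case 0 then show ?thesis by simp
next
  case (Suc m)
  have "2 * (n choose 2) = n * ((n - 1) choose 1)"
    using times_binomial_minus1_eq[of 2 n] by simp
  then have "2 * (n choose 2) = n * m" using Suc by simp
  then have "2 * real (n choose 2) = real n * real m" by (metis of_nat_mult of_nat_numeral)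
  then show ?thesis using Suc by (simp add: field_simps)
qed

lemma ed_eq: "expected_dist n = real (total_wiener n) / (real (n choose 2) * real (card (bintrees n)))"
proof -
  have "(\<Sum>t\<in>bintrees n. real (wiener t) / real (card (vpairs t)))
      = (\<Sum>t\<in>bintrees n. real (wiener t) / real (n choose 2))"
    by (intro sum.cong refl) (simp add: card_vpairs size_bintrees)
  also have "\<dots> = real (total_wiener n) / real (n choose 2)"
    by (simp add: total_wiener_def sum_divide_distrib)
  finally show ?thesis unfolding expected_dist_def by simp
qed

lemma E_abs: "(N::real) \<ge> 2 \<Longrightarrow> b > 0 \<Longrightarrow> F > 0 \<Longrightarrow>
  ((N + 2) / 2 * F - (2 * N + 1) * b) / ((N * (N - 1) / 2) * (b / (N + 1)))
   = (N+1)*(N+2)*(1 / (b / F))/(N*(N-1)) - 2*(2*N+1)*(N+1)/(N*(N-1))"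
proof -
  assume a: "N \<ge> 2" "b > 0" "F > 0"
  have "N \<noteq> 0" "N - 1 \<noteq> 0" "N + 1 \<noteq> 0" "b \<noteq> 0" "F \<noteq> 0" using a by auto
  then show ?thesis by (simp add: divide_simps) (simp add: algebra_simps)
qed

lemma E_closed: "n \<ge> 2 \<Longrightarrow> expected_dist n
   = (real n+1)*(real n+2)*(1 / qq n)/(real n*(real n-1)) - 2*(2*real n+1)*(real n+1)/(real n*(real n-1))"
proof -
  assume n: "n \<ge> 2"
  have "expected_dist n = ((real n + 2) / 2 * 4 ^ n - (2 * real n + 1) * real ((2 * n) choose n))
     / ((real n * (real n - 1) / 2) * (real ((2 * n) choose n) / (real n + 1)))"
    unfolding ed_eq tw_closed choose2_real card_bintrees ..
  also have "\<dots> = (real n+1)*(real n+2)*(1 / (real ((2 * n) choose n) / 4 ^ n))/(real n*(real n-1))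
       - 2*(2*real n+1)*(real n+1)/(real n*(real n-1))"
    using n by (intro E_abs) auto
  finally show ?thesis unfolding qq_def .
qed

lemma part4: "(\<lambda>n. expected_dist n - (sqrt (pi * real n) - 4)) \<in> O(\<lambda>n. 1 / sqrt (real n))"
proof (rule bigoI[where c = 53])
  show "\<forall>\<^sub>F n in at_top. norm (expected_dist n - (sqrt (pi * real n) - 4)) \<le> 53 * norm (1 / sqrt (real n))"
    unfolding eventually_at_top_linorder
  proof (intro exI allI impI)
    fix n :: nat assume n: "n \<ge> 2"
    let ?q = "qq n"
    have q: "?q > 0" by (rule qq_pos)
    have up1: "real n * ?q ^ 2 \<le> 1 / pi" using n by (intro qq_upper) auto
    have lo1: "2 / pi \<le> (2 * real n + 1) * ?q ^ 2" by (rule qq_lower)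
    have A: "pi * real n \<le> (1 / ?q) ^ 2"
      using up1 q pi_gt_zero by (simp add: field_simps)
    have B: "(1 / ?q) ^ 2 \<le> pi * real n + pi / 2"
      using lo1 q pi_gt_zero by (simp add: field_simps)
    have lo: "sqrt (pi * real n) \<le> 1 / ?q"
    proof -
      have "sqrt (pi * real n) \<le> sqrt ((1 / ?q) ^ 2)" using A by (rule real_sqrt_le_mono)
      also have "\<dots> = 1 / ?q" using q by simp
      finally show ?thesis .
    qed
    have "\<bar>(real n+1)*(real n+2)*(1 / ?q)/(real n*(real n-1)) - 2*(2*real n+1)*(real n+1)/(real n*(real n-1))
        - (sqrt (pi * real n) - 4)\<bar> \<le> 53 / sqrt (real n)"
      using n by (intro final_abs[OF _ refl refl lo B]) auto
    then show "norm (expected_dist n - (sqrt (pi * real n) - 4)) \<le> 53 * norm (1 / sqrt (real n))"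
      using n by (simp add: E_closed)
  qed
qed


theorem mainTheorem15:
  shows "(\<forall>n::nat. n \<ge> 1 \<longrightarrow>
            real (total_wiener n) = (real n + 2) / 2 * 4 ^ n - fact (2 * n + 1) / (fact n) ^ 2)
       \<and> (\<forall>x::real. \<bar>x\<bar> < 1 / 4 \<longrightarrow>
            (\<lambda>n. real (total_wiener n) * x ^ n) sums ((1 - sqrt (1 - 4 * x) - 2 * x) / (1 - 4 * x) ^ 2))
       \<and> (\<forall>n::nat. n \<ge> 1 \<longrightarrow>
            real (num_pairs n) = real (n choose 2) * (1 / (real n + 1)) * real ((2 * n) choose n))
       \<and> (\<lambda>n. expected_dist n - (sqrt (pi * real n) - 4)) \<in> O(\<lambda>n. 1 / sqrt (real n))"
    using part1 part2 part3 part4 by blast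

end
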